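(* Let $m\ge 2$ and $\bm P_m=\bm I_m-\frac1m\bm J_m\in\mathbb{R}^{m\times m}$. Then $\bm P_m$ admits a unique Cholesky factorization $\bm P_m=\bm L\bm L^T$ with $\bm L\in\mathbb{R}^{m\times m}$ lower triangular with nonnegative diagonal entries, and $\bm L$ is given explicitly by \[ L_{ij}=\begin{cases}\sqrt{\dfrac{m-i}{m-i+1}}, & i=j<m,\\[1ex] -\dfrac{1}{\sqrt{(m-j+1)(m-j)}}, & 1\le j<i\le m,\\[1ex] 0, & \text{otherwise}.\end{cases} \]
   Context: $\bm J_m$ denotes the $m\times m$ all-ones matrix and $\bm I_m$ the identity matrix. *)

theory Defs
  imports "Jordan_Normal_Form.Matrix"
begin

(* Matrices are Jordan_Normal_Form matrices, indices are 0-based: entry (i,j) here is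
   entry (i+1,j+1) of the paper. *)

definition lower_triangular_mat :: "'a::zero mat \<Rightarrow> bool" where
  "lower_triangular_mat A \<longleftrightarrow> (\<forall>i < dim_row A. \<forall>j < dim_col A. i < j \<longrightarrow> A $$ (i,j) = 0)"

definition centering_mat :: "nat \<Rightarrow> real mat" where
  "centering_mat m = 1\<^sub>m m - (1 / real m) \<cdot>\<^sub>m mat m m (\<lambda>_. 1)"

definition chol_centering :: "nat \<Rightarrow> real mat" where
  "chol_centering m = mat m m (\<lambda>(i,j).
     let i' = i + 1; j' = j + 1 in
     if i' = j' \<and> i' < m then sqrt ((real m - real i') / (real m - real i' + 1))
     else if 1 \<le> j' \<and> j' < i' \<and> i' \<le> m then
       - 1 / sqrt ((real m - real j' + 1) * (real m - real j'))
     else 0)"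

definition is_chol_factor :: "nat \<Rightarrow> real mat \<Rightarrow> real mat \<Rightarrow> bool" where
  "is_chol_factor m P L \<longleftrightarrow> L \<in> carrier_mat m m \<and> lower_triangular_mat L
     \<and> (\<forall>i < m. L $$ (i,i) \<ge> 0) \<and> P = L * transpose_mat L"

end

theory Submission
  imports Defs
begin

lemma mult_transpose_entry:
  assumes "A \<in> carrier_mat m m" "i < m" "j < m"
  shows "(A * transpose_mat A) $$ (i,j) = (\<Sum>k\<in>{0..<m}. A $$ (i,k) * A $$ (j,k))"
  using assms by (simp add: scalar_prod_def)

lemma lt_sum_split:
  fixes f :: "nat \<Rightarrow> nat \<Rightarrow> real"
  assumes lt: "\<And>a b. a < b \<Longrightarrow> b < m \<Longrightarrow> f a b = 0" and ji: "j \<le> i" and im: "i < m"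
  shows "(\<Sum>k\<in>{0..<m}. f i k * f j k) = (\<Sum>k\<in>{0..<j}. f i k * f j k) + f i j * f j j"
proof -
  have "{0..<m} = {0..<Suc j} \<union> {Suc j..<m}" using ji im by auto
  hence "(\<Sum>k\<in>{0..<m}. f i k * f j k) = (\<Sum>k\<in>{0..<Suc j}. f i k * f j k) + (\<Sum>k\<in>{Suc j..<m}. f i k * f j k)"
    by (simp add: sum.union_disjoint)
  also have "(\<Sum>k\<in>{Suc j..<m}. f i k * f j k) = 0"
    by (rule sum.neutral) (auto simp: lt)
  finally show ?thesis by simp
qed

lemma chol_entry:
  assumes "i < m" "j < m"
  shows "chol_centering m $$ (i,j) =
    (if i = j \<and> i + 1 < m then sqrt ((real m - real i - 1) / (real m - real i))
     else if j < i then - 1 / sqrt ((real m - real j) * (real m - real j - 1)) else 0)"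
  using assms unfolding chol_centering_def by (auto simp: Let_def algebra_simps)

lemma telescope:
  assumes "j < m"
  shows "(\<Sum>k\<in>{0..<j}. 1 / ((real m - real k) * (real m - real k - 1))) = 1 / (real m - real j) - 1 / real m"
  using assms
proof (induction j)
  case 0 then show ?case by simp
next
  case (Suc j)
  have a: "real m - real j - 1 > 0" using Suc.prems by simp
  have b: "real m - real j > 0" using Suc.prems by simp
  have "(\<Sum>k\<in>{0..<Suc j}. 1 / ((real m - real k) * (real m - real k - 1)))
     = 1 / (real m - real j) - 1 / real m + 1 / ((real m - real j) * (real m - real j - 1))"
    using Suc by simp
  also have "\<dots> = 1 / (real m - real (Suc j)) - 1 / real m"
  proof -
    define x where "x = real m - real j"
    have x: "x > 0" "x - 1 > 0" using a b by (auto simp: x_def)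
    have "1 / x + 1 / (x * (x - 1)) = 1 / (x - 1)" using x by (simp add: field_simps)
    thus ?thesis by (simp add: x_def algebra_simps)
  qed
  finally show ?case .
qed

lemma chol_lt: "a < b \<Longrightarrow> b < m \<Longrightarrow> chol_centering m $$ (a,b) = 0"
  by (simp add: chol_entry)

lemma chol_prod_entry:
  assumes ji: "j \<le> i" and im: "i < m"
  shows "(chol_centering m * transpose_mat (chol_centering m)) $$ (i,j) = (if i = j then 1 else 0) - 1 / real m"
proof -
  let ?C = "chol_centering m"
  have jm: "j < m" using ji im by simp
  have car: "?C \<in> carrier_mat m m" by (simp add: chol_centering_def)
  have "(?C * transpose_mat ?C) $$ (i,j) = (\<Sum>k\<in>{0..<j}. ?C $$ (i,k) * ?C $$ (j,k)) + ?C $$ (i,j) * ?C $$ (j,j)"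
    using mult_transpose_entry[OF car im jm] lt_sum_split[of m "\<lambda>a b. ?C $$ (a,b)", OF chol_lt ji im] by simp
  also have "(\<Sum>k\<in>{0..<j}. ?C $$ (i,k) * ?C $$ (j,k)) = (\<Sum>k\<in>{0..<j}. 1 / ((real m - real k) * (real m - real k - 1)))"
  proof (rule sum.cong)
    fix k assume k: "k \<in> {0..<j}"
    have pos: "(real m - real k) * (real m - real k - 1) > 0" using k jm by simp
    have "?C $$ (i,k) * ?C $$ (j,k) = (- 1 / sqrt ((real m - real k) * (real m - real k - 1)))^2"
      using k ji im by (simp add: chol_entry power2_eq_square)
    also have "\<dots> = 1 / ((real m - real k) * (real m - real k - 1))"
      using pos by (simp add: power_divide)
    finally show "?C $$ (i,k) * ?C $$ (j,k) = 1 / ((real m - real k) * (real m - real k - 1))" .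
  qed simp
  also have "\<dots> = 1 / (real m - real j) - 1 / real m" using telescope[OF jm] .
  also have "?C $$ (i,j) * ?C $$ (j,j) = (if i = j then (real m - real j - 1) / (real m - real j) else - 1 / (real m - real j))"
  proof (cases "i = j")
    case True
    show ?thesis
    proof (cases "j + 1 < m")
      case True
      have "(real m - real j - 1) / (real m - real j) \<ge> 0" using True by simp
      thus ?thesis using True \<open>i = j\<close> jm by (simp add: chol_entry)
    next
      case False
      hence "real m - real j - 1 = 0" using jm by simp
      thus ?thesis using False \<open>i = j\<close> jm by (simp add: chol_entry)
    qed
  next
    case False
    hence jl: "j < i" "j + 1 < m" using ji im by auto
    define a where "a = real m - real j"
    define b where "b = real m - real j - 1"
    have a: "a > 0" and b: "b > 0" using jl by (auto simp: a_def b_def)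
    have "?C $$ (i,j) * ?C $$ (j,j) = - 1 / sqrt (a * b) * sqrt (b / a)"
      using jl im by (simp add: chol_entry a_def b_def)
    also have "\<dots> = - 1 / (sqrt a * sqrt a)"
      using a b by (simp add: real_sqrt_mult real_sqrt_divide field_simps)
    also have "\<dots> = - 1 / a" using a by simp
    finally show ?thesis using False by (simp add: a_def)
  qed
  finally have fin: "(?C * transpose_mat ?C) $$ (i,j) = 1 / (real m - real j) - 1 / real m +
     (if i = j then (real m - real j - 1) / (real m - real j) else - 1 / (real m - real j))" .
  have x: "real m - real j \<noteq> 0" using jm by simp
  show ?thesis
  proof (cases "i = j")
    case True
    have "1 / (real m - real j) + (real m - real j - 1) / (real m - real j) = 1"
      using x by (simp add: field_simps)
    thus ?thesis using fin True by simp
  next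
    case False thus ?thesis using fin by simp
  qed
qed

lemma centering_entry:
  "i < m \<Longrightarrow> j < m \<Longrightarrow> centering_mat m $$ (i,j) = (if i = j then 1 else 0) - 1 / real m"
  by (simp add: centering_mat_def)

lemma chol_exists:
  assumes "m \<ge> 2"
  shows "is_chol_factor m (centering_mat m) (chol_centering m)"
  unfolding is_chol_factor_def
proof (intro conjI allI impI)
  show car: "chol_centering m \<in> carrier_mat m m" by (simp add: chol_centering_def)
  show "lower_triangular_mat (chol_centering m)"
    unfolding lower_triangular_mat_def using car by (auto simp: chol_lt)
  fix i assume "i < m"
  thus "0 \<le> chol_centering m $$ (i, i)" by (simp add: chol_entry)
next
  have car: "chol_centering m \<in> carrier_mat m m" by (simp add: chol_centering_def)
  show "centering_mat m = chol_centering m * transpose_mat (chol_centering m)"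
  proof (rule eq_matI)
    fix i j assume i: "i < dim_row (chol_centering m * transpose_mat (chol_centering m))"
      and j: "j < dim_col (chol_centering m * transpose_mat (chol_centering m))"
    hence im: "i < m" and jm: "j < m" using car by auto
    show "centering_mat m $$ (i, j) = (chol_centering m * transpose_mat (chol_centering m)) $$ (i, j)"
    proof (cases "j \<le> i")
      case True thus ?thesis using chol_prod_entry[OF True im] centering_entry[OF im jm] by simp
    next
      case False
      hence "i \<le> j" by simp
      have "(chol_centering m * transpose_mat (chol_centering m)) $$ (i, j)
          = (chol_centering m * transpose_mat (chol_centering m)) $$ (j, i)"
        using mult_transpose_entry[OF car im jm] mult_transpose_entry[OF car jm im]
        by (simp add: mult.commute)
      thus ?thesis using chol_prod_entry[OF \<open>i \<le> j\<close> jm] centering_entry[OF im jm] False by simp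
    qed
  qed (auto simp: centering_mat_def chol_centering_def)
qed

lemma chol_unique_gen:
  fixes L C :: "real mat"
  assumes L: "L \<in> carrier_mat m m" and C: "C \<in> carrier_mat m m"
    and Llt: "\<And>a b. a < b \<Longrightarrow> b < m \<Longrightarrow> L $$ (a,b) = 0"
    and Clt: "\<And>a b. a < b \<Longrightarrow> b < m \<Longrightarrow> C $$ (a,b) = 0"
    and Lnn: "\<And>a. a < m \<Longrightarrow> L $$ (a,a) \<ge> 0"
    and Cnn: "\<And>a. a < m \<Longrightarrow> C $$ (a,a) \<ge> 0"
    and Cpos: "\<And>a. a + 1 < m \<Longrightarrow> C $$ (a,a) > 0"
    and eq: "L * transpose_mat L = C * transpose_mat C"
  shows "L = C"
proof -
  have col: "\<forall>i<m. L $$ (i,j) = C $$ (i,j)" if "j < m" for j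
    using that
  proof (induction j rule: less_induct)
    case (less j)
    have key: "L $$ (i,j) * L $$ (j,j) = C $$ (i,j) * C $$ (j,j)" if ji: "j \<le> i" and im: "i < m" for i
    proof -
      have "(L * transpose_mat L) $$ (i,j) = (C * transpose_mat C) $$ (i,j)" using eq by simp
      hence "(\<Sum>k\<in>{0..<m}. L $$ (i,k) * L $$ (j,k)) = (\<Sum>k\<in>{0..<m}. C $$ (i,k) * C $$ (j,k))"
        using mult_transpose_entry[OF L im less.prems] mult_transpose_entry[OF C im less.prems] by simp
      hence "(\<Sum>k\<in>{0..<j}. L $$ (i,k) * L $$ (j,k)) + L $$ (i,j) * L $$ (j,j)
           = (\<Sum>k\<in>{0..<j}. C $$ (i,k) * C $$ (j,k)) + C $$ (i,j) * C $$ (j,j)"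
        using lt_sum_split[of m "\<lambda>a b. L $$ (a,b)", OF Llt ji im]
          lt_sum_split[of m "\<lambda>a b. C $$ (a,b)", OF Clt ji im] by simp
      moreover have "(\<Sum>k\<in>{0..<j}. L $$ (i,k) * L $$ (j,k)) = (\<Sum>k\<in>{0..<j}. C $$ (i,k) * C $$ (j,k))"
        using less.IH less.prems im by (intro sum.cong) auto
      ultimately show ?thesis by simp
    qed
    have diag: "L $$ (j,j) = C $$ (j,j)"
    proof -
      have "(L $$ (j,j))^2 = (C $$ (j,j))^2" using key[of j] less.prems by (simp add: power2_eq_square)
      thus ?thesis using Lnn[OF less.prems] Cnn[OF less.prems] by (simp add: power2_eq_iff_nonneg)
    qed
    show ?case
    proof (intro allI impI)
      fix i assume im: "i < m"
      consider "i < j" | "i = j" | "j < i" by linarith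
      thus "L $$ (i,j) = C $$ (i,j)"
      proof cases
        case 1 thus ?thesis using Llt Clt less.prems by simp
      next
        case 2 thus ?thesis using diag by simp
      next
        case 3
        have p: "C $$ (j,j) > 0" using Cpos 3 im by simp
        have "L $$ (i,j) * C $$ (j,j) = C $$ (i,j) * C $$ (j,j)" using key[of i] 3 im diag by simp
        thus ?thesis using p by simp
      qed
    qed
  qed
  show ?thesis
    by (rule eq_matI) (use L C col in auto)
qed

theorem lemma2:
  fixes m :: nat
  assumes "m \<ge> 2"
  shows "(\<exists>!L. is_chol_factor m (centering_mat m) L)
         \<and> is_chol_factor m (centering_mat m) (chol_centering m)"
proof -
  have ex: "is_chol_factor m (centering_mat m) (chol_centering m)" using chol_exists[OF assms] .
  have uniq: "L = chol_centering m" if "is_chol_factor m (centering_mat m) L" for L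
  proof -
    have Lc: "L \<in> carrier_mat m m" and Ll: "lower_triangular_mat L"
      and Ln: "\<forall>i<m. L $$ (i,i) \<ge> 0" and Le: "centering_mat m = L * transpose_mat L"
      using that unfolding is_chol_factor_def by auto
    have Cc: "chol_centering m \<in> carrier_mat m m" and Ce: "centering_mat m = chol_centering m * transpose_mat (chol_centering m)"
      and Cn: "\<forall>i<m. chol_centering m $$ (i,i) \<ge> 0"
      using ex unfolding is_chol_factor_def by auto
    show ?thesis
    proof (rule chol_unique_gen[OF Lc Cc])
      show "\<And>a b. a < b \<Longrightarrow> b < m \<Longrightarrow> L $$ (a,b) = 0"
        using Ll Lc unfolding lower_triangular_mat_def by auto
      show "\<And>a b. a < b \<Longrightarrow> b < m \<Longrightarrow> chol_centering m $$ (a,b) = 0" by (rule chol_lt)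
      show "\<And>a. a < m \<Longrightarrow> L $$ (a,a) \<ge> 0" using Ln by auto
      show "\<And>a. a < m \<Longrightarrow> chol_centering m $$ (a,a) \<ge> 0" using Cn by auto
      show "\<And>a. a + 1 < m \<Longrightarrow> chol_centering m $$ (a,a) > 0" by (simp add: chol_entry)
      show "L * transpose_mat L = chol_centering m * transpose_mat (chol_centering m)" using Le Ce by simp
    qed
  qed
  show ?thesis using ex uniq by blast
qed

end
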